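(* Let $\mathcal G$ be a connected undirected graph on vertices $\{1,\dots,n\}$ with $m$ edges, where each edge $\{i,j\}$ carries $\beta_{ij}<0$ and $V_i>0$ for each vertex. Let $R\in\mathbb R^{n\times m}$ be the incidence matrix of $\mathcal G$ for an arbitrary orientation, $\Gamma=\mathrm{diag}(\gamma_k)$ with $\gamma_k=|\beta_{ij}|V_iV_j$ for edge $k\sim\{i,j\}$, and let $\sigma_i>0$ satisfy $\sum_{j\in\mathcal N_i}|\beta_{ij}|V_iV_j\le\frac12\sigma_i$ for each $i$, where $\mathcal N_i$ is the set of neighbors of $i$. With $\Sigma=\mathrm{diag}(\sigma_i)$, it holds that $\Gamma^{-1}-R^{\top}\Sigma^{-1}R\succeq0$.
   Context: Incidence matrix: $R_{ik}=1$ if vertex $i$ is the sink of edge $k$, $R_{ik}=-1$ if it is the source, and $R_{ik}=0$ otherwise. $\succeq0$ denotes positive semidefiniteness. *)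

theory Defs
  imports "HOL-Analysis.Analysis"
begin

definition diag_mat :: "('n::finite \<Rightarrow> real) \<Rightarrow> real^'n^'n" where
  "diag_mat d = (\<chi> i j. if i = j then d i else 0)"

definition incidence_mat :: "('m::finite \<Rightarrow> 'n::finite) \<Rightarrow> ('m \<Rightarrow> 'n) \<Rightarrow> real^'m^'n" where
  "incidence_mat src snk = (\<chi> i k. if i = snk k then 1 else if i = src k then -1 else 0)"

definition psd :: "real^'n^'n \<Rightarrow> bool" where
  "psd A \<longleftrightarrow> transpose A = A \<and> (\<forall>x. 0 \<le> x \<bullet> (A *v x))"

definition adj :: "('m \<Rightarrow> 'n) \<Rightarrow> ('m \<Rightarrow> 'n) \<Rightarrow> 'n \<Rightarrow> 'n \<Rightarrow> bool" where
  "adj src snk i j \<longleftrightarrow> (\<exists>k. {src k, snk k} = {i, j})"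

definition neighbors :: "('m \<Rightarrow> 'n) \<Rightarrow> ('m \<Rightarrow> 'n) \<Rightarrow> 'n \<Rightarrow> 'n set" where
  "neighbors src snk i = {j. adj src snk i j}"

definition simple_edges :: "('m \<Rightarrow> 'n) \<Rightarrow> ('m \<Rightarrow> 'n) \<Rightarrow> bool" where
  "simple_edges src snk \<longleftrightarrow> (\<forall>k. src k \<noteq> snk k) \<and>
     (\<forall>k l. {src k, snk k} = {src l, snk l} \<longrightarrow> k = l)"

definition connected_graph :: "('m \<Rightarrow> 'n) \<Rightarrow> ('m \<Rightarrow> 'n) \<Rightarrow> bool" where
  "connected_graph src snk \<longleftrightarrow> (\<forall>i j. (adj src snk)\<^sup>*\<^sup>* i j)"

end

theory Submission
  imports Defs
begin

lemma diag_mul: "diag_mat d ** diag_mat e = diag_mat (\<lambda>i. d i * e i)"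
proof -
  have "(\<Sum>k\<in>UNIV. (if i = k then d i else 0) * (if k = j then e k else 0)) = (if i = j then d i * e i else 0)" for i j
  proof -
    have "(\<Sum>k\<in>UNIV. (if i = k then d i else 0) * (if k = j then e k else 0)) = (\<Sum>k\<in>UNIV. if k = i then d i * (if k = j then e k else 0) else 0)"
      by (rule sum.cong) auto
    also have "\<dots> = d i * (if i = j then e i else 0)" by simp
    finally show ?thesis by simp
  qed
  then show ?thesis by (simp add: diag_mat_def matrix_matrix_mult_def vec_eq_iff)
qed
lemma mat1_diag: "mat 1 = diag_mat (\<lambda>_. 1)"
  by (simp add: diag_mat_def mat_def)

lemma inv_unique:
  fixes A B :: "real^'n^'n"
  assumes "A ** B = mat 1" "B ** A = mat 1"
  shows "matrix_inv A = B"
proof -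
  have ex: "A ** matrix_inv A = mat 1 \<and> matrix_inv A ** A = mat 1"
    unfolding matrix_inv_def by (rule someI[of _ B]) (use assms in auto)
  have "matrix_inv A = matrix_inv A ** (A ** B)" using assms by simp
  also have "\<dots> = (matrix_inv A ** A) ** B" by (simp add: matrix_mul_assoc)
  also have "\<dots> = B" using ex by simp
  finally show ?thesis .
qed

lemma diag_inv:
  assumes "\<And>i. d i \<noteq> 0"
  shows "matrix_inv (diag_mat d) = diag_mat (\<lambda>i. 1 / d i)"
  by (rule inv_unique) (simp_all add: diag_mul mat1_diag assms)

lemma transpose_diag: "transpose (diag_mat d) = diag_mat d"
  by (simp add: transpose_def diag_mat_def vec_eq_iff)

lemma transpose_diff: "transpose (A - B) = transpose A - transpose (B::real^'n^'m)"
  by (simp add: transpose_def vec_eq_iff)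

lemma quad_diag: "y \<bullet> (diag_mat d *v y) = (\<Sum>k\<in>UNIV. d k * (y$k)^2)"
proof -
  have "(\<Sum>j\<in>UNIV. (if k = j then d k else 0) * y$j) = d k * y$k" for k
  proof -
    have "(\<Sum>j\<in>UNIV. (if k = j then d k else 0) * y$j) = (\<Sum>j\<in>UNIV. if j = k then d k * y$j else 0)"
      by (rule sum.cong) auto
    then show ?thesis by simp
  qed
  then show ?thesis by (simp add: inner_vec_def matrix_vector_mult_def diag_mat_def power2_eq_square ac_simps)
qed
lemma wcs:
  fixes w s a z :: "'m::finite \<Rightarrow> real"
  assumes w: "\<And>k. w k > 0" and as: "\<And>k. a k * s k = s k" and aa: "\<And>k. a k * a k = a k"
    and ss: "\<And>k. s k * s k = a k"
  shows "(\<Sum>k\<in>UNIV. s k * z k)^2 \<le> (\<Sum>k\<in>UNIV. a k * w k) * (\<Sum>k\<in>UNIV. a k * (z k)^2 / w k)"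
proof -
  define u :: "real^'m" where "u = (\<chi> k. a k * sqrt (w k))"
  define v :: "real^'m" where "v = (\<chi> k. s k * z k / sqrt (w k))"
  have sq: "sqrt (w k) \<noteq> 0" "sqrt (w k) * sqrt (w k) = w k" for k using w[of k] by auto
  have "u \<bullet> v = (\<Sum>k\<in>UNIV. s k * z k)"
    unfolding u_def v_def inner_vec_def inner_real_def
  proof (rule sum.cong)
    fix k
    have "a k * sqrt (w k) * (s k * z k / sqrt (w k)) = (a k * s k) * z k"
      using sq(1)[of k] by (simp add: field_simps)
    also have "\<dots> = s k * z k" by (simp only: as)
    finally show "(\<chi> k. a k * sqrt (w k)) $ k * (\<chi> k. s k * z k / sqrt (w k)) $ k = s k * z k"
      by simp
  qed simp
  moreover have "u \<bullet> u = (\<Sum>k\<in>UNIV. a k * w k)"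
    unfolding u_def inner_vec_def inner_real_def
  proof (rule sum.cong)
    fix k
    have "a k * sqrt (w k) * (a k * sqrt (w k)) = (a k * a k) * (sqrt (w k) * sqrt (w k))"
      by (simp add: ac_simps)
    also have "\<dots> = a k * w k" by (simp only: aa sq(2))
    finally show "(\<chi> k. a k * sqrt (w k)) $ k * (\<chi> k. a k * sqrt (w k)) $ k = a k * w k"
      by simp
  qed simp
  moreover have "v \<bullet> v = (\<Sum>k\<in>UNIV. a k * (z k)^2 / w k)"
    unfolding v_def inner_vec_def inner_real_def
  proof (rule sum.cong)
    fix k
    have "s k * z k / sqrt (w k) * (s k * z k / sqrt (w k)) = (s k * s k) * (z k * z k) / (sqrt (w k) * sqrt (w k))"
      by (simp add: field_simps)
    also have "\<dots> = a k * (z k)^2 / w k" by (simp only: ss sq(2) power2_eq_square)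
    finally show "(\<chi> k. s k * z k / sqrt (w k)) $ k * (\<chi> k. s k * z k / sqrt (w k)) $ k = a k * (z k)^2 / w k"
      by simp
  qed simp
  ultimately show ?thesis using Cauchy_Schwarz_ineq[of u v] by simp
qed


theorem lemma3:
  fixes src snk :: "'m::finite \<Rightarrow> 'n::finite"
    and beta :: "'n \<Rightarrow> 'n \<Rightarrow> real"
    and V sigma :: "'n \<Rightarrow> real"
  assumes simple: "simple_edges src snk"
    and conn: "connected_graph src snk"
    and beta_sym: "\<And>i j. beta i j = beta j i"
    and beta_neg: "\<And>k. beta (src k) (snk k) < 0"
    and V_pos: "\<And>i. V i > 0"
    and sigma_pos: "\<And>i. sigma i > 0"
    and sigma_bound: "\<And>i. (\<Sum>j\<in>neighbors src snk i. \<bar>beta i j\<bar> * V i * V j) \<le> sigma i / 2"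
  shows "psd (matrix_inv (diag_mat (\<lambda>k. \<bar>beta (src k) (snk k)\<bar> * V (src k) * V (snk k)))
              - transpose (incidence_mat src snk) ** matrix_inv (diag_mat sigma) ** incidence_mat src snk)"
proof -
  define g where "g k = \<bar>beta (src k) (snk k)\<bar> * V (src k) * V (snk k)" for k
  define R where "R = incidence_mat src snk"
  define D2 where "D2 = diag_mat (\<lambda>i. 1 / sigma i)"
  define a where "a i k = (if i = snk k then 1 else 0) + (if i = src k then (1::real) else 0)" for i k
  have nl: "src k \<noteq> snk k" for k using simple unfolding simple_edges_def by auto
  have uniq: "{src k, snk k} = {src l, snk l} \<Longrightarrow> k = l" for k l
    using simple unfolding simple_edges_def by auto
  have gpos: "g k > 0" for k
    unfolding g_def using beta_neg[of k] V_pos[of "src k"] V_pos[of "snk k"] by (simp add: mult_pos_pos mult_neg_pos)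
  have D1eq: "matrix_inv (diag_mat g) = diag_mat (\<lambda>k. 1 / g k)"
    by (rule diag_inv) (use gpos in \<open>simp add: less_imp_neq[symmetric]\<close>)
  have D2eq: "matrix_inv (diag_mat sigma) = D2"
    unfolding D2_def by (rule diag_inv) (use sigma_pos in \<open>simp add: less_imp_neq[symmetric]\<close>)
  have gfun: "(\<lambda>k. \<bar>beta (src k) (snk k)\<bar> * V (src k) * V (snk k)) = g"
    by (simp add: g_def fun_eq_iff)
  have Rik: "R$i$k = (if i = snk k then 1 else if i = src k then -1 else 0)" for i k
    by (simp add: R_def incidence_mat_def)
  have nb: "(\<Sum>k\<in>UNIV. a i k * g k) \<le> sigma i / 2" for i
  proof -
    define A where "A = {k. snk k = i}"
    define B where "B = {k. src k = i}"
    define f where "f j = \<bar>beta i j\<bar> * V i * V j" for j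
    have "(\<Sum>k\<in>UNIV. a i k * g k) = (\<Sum>k\<in>UNIV. (if snk k = i then g k else 0)) + (\<Sum>k\<in>UNIV. (if src k = i then g k else 0))"
      unfolding a_def by (simp add: sum.distrib[symmetric] distrib_right) (rule sum.cong, auto)
    also have "\<dots> = sum g A + sum g B"
      unfolding A_def B_def by (simp add: sum.inter_filter[symmetric])
    also have "sum g A = sum (f \<circ> src) A"
      by (rule sum.cong) (auto simp: A_def f_def g_def beta_sym[of "snk _"] ac_simps)
    also have "\<dots> = sum f (src ` A)"
    proof (rule sum.reindex[symmetric])
      show "inj_on src A"
        by (rule inj_onI) (rule uniq, auto simp: A_def)
    qed
    also have "sum g B = sum (f \<circ> snk) B"
      by (rule sum.cong) (auto simp: B_def f_def g_def)
    also have "\<dots> = sum f (snk ` B)"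
    proof (rule sum.reindex[symmetric])
      show "inj_on snk B"
        by (rule inj_onI) (rule uniq, auto simp: B_def)
    qed
    also have "sum f (src ` A) + sum f (snk ` B) = sum f (src ` A \<union> snk ` B)"
    proof (rule sum.union_disjoint[symmetric])
      show "src ` A \<inter> snk ` B = {}"
      proof (rule ccontr)
        assume "src ` A \<inter> snk ` B \<noteq> {}"
        then obtain k l where kl: "snk k = i" "src l = i" "src k = snk l"
          by (auto simp: A_def B_def)
        then have "{src k, snk k} = {src l, snk l}" by auto
        then have "k = l" by (rule uniq)
        then show False using kl nl[of k] by simp
      qed
    qed auto
    also have "src ` A \<union> snk ` B = neighbors src snk i"
      unfolding neighbors_def adj_def A_def B_def
      by (auto simp: doubleton_eq_iff)
    finally have "(\<Sum>k\<in>UNIV. a i k * g k) = (\<Sum>j\<in>neighbors src snk i. f j)" .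
    then show ?thesis using sigma_bound[of i] by (simp add: f_def)
  qed
  show ?thesis
    unfolding psd_def gfun D1eq D2eq R_def[symmetric]
  proof
    show "transpose (diag_mat (\<lambda>k. 1 / g k) - transpose R ** D2 ** R) = diag_mat (\<lambda>k. 1 / g k) - transpose R ** D2 ** R"
      by (simp add: transpose_diff matrix_transpose_mul transpose_diag D2_def matrix_mul_assoc)
    show "\<forall>y. 0 \<le> y \<bullet> ((diag_mat (\<lambda>k. 1 / g k) - transpose R ** D2 ** R) *v y)"
    proof
      fix y :: "real^'m"
      define r where "r = R *v y"
      have r_i: "r$i = (\<Sum>k\<in>UNIV. R$i$k * y$k)" for i
        by (simp add: r_def matrix_vector_mult_def)
      have q1: "y \<bullet> (diag_mat (\<lambda>k. 1 / g k) *v y) = (\<Sum>k\<in>UNIV. 1 / g k * (y$k)^2)"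
        by (rule quad_diag)
      have "y \<bullet> ((transpose R ** D2 ** R) *v y) = y \<bullet> (transpose R *v (D2 *v r))"
        by (simp add: r_def matrix_vector_mul_assoc matrix_mul_assoc)
      also have "\<dots> = (D2 *v r) \<bullet> r"
        unfolding r_def by (metis transpose_matrix_vector dot_lmul_matrix inner_commute)
      also have "\<dots> = (\<Sum>i\<in>UNIV. 1 / sigma i * (r$i)^2)"
        unfolding D2_def by (simp add: inner_commute quad_diag)
      finally have q2: "y \<bullet> ((transpose R ** D2 ** R) *v y) = (\<Sum>i\<in>UNIV. 1 / sigma i * (r$i)^2)" .
      have per: "1 / sigma i * (r$i)^2 \<le> (\<Sum>k\<in>UNIV. a i k * ((y$k)^2 / g k)) / 2" for i
      proof -
        have cs: "(r$i)^2 \<le> (\<Sum>k\<in>UNIV. a i k * g k) * (\<Sum>k\<in>UNIV. a i k * (y$k)^2 / g k)"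
          unfolding r_i
          by (rule wcs) (use gpos nl in \<open>auto simp: a_def Rik, metis\<close>)
        have nn: "0 \<le> (\<Sum>k\<in>UNIV. a i k * (y$k)^2 / g k)"
          by (rule sum_nonneg) (use gpos in \<open>auto simp: a_def intro!: divide_nonneg_pos\<close>)
        have "(r$i)^2 \<le> sigma i / 2 * (\<Sum>k\<in>UNIV. a i k * (y$k)^2 / g k)"
          using cs mult_right_mono[OF nb[of i] nn] by linarith
        then show ?thesis using sigma_pos[of i]
          by (simp add: field_simps)
      qed
      have "(\<Sum>i\<in>UNIV. 1 / sigma i * (r$i)^2) \<le> (\<Sum>i\<in>UNIV. (\<Sum>k\<in>UNIV. a i k * ((y$k)^2 / g k)) / 2)"
        by (rule sum_mono) (rule per)
      also have "\<dots> = (\<Sum>k\<in>UNIV. (\<Sum>i\<in>UNIV. a i k) * ((y$k)^2 / g k)) / 2"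
        unfolding sum_divide_distrib[symmetric] sum_distrib_right
        by (subst sum.swap) (rule refl)
      also have "\<dots> = (\<Sum>k\<in>UNIV. 1 / g k * (y$k)^2)"
      proof -
        have "(\<Sum>i\<in>UNIV. a i k) = 2" for k
          by (simp add: a_def sum.distrib)
        then show ?thesis by (simp add: sum_divide_distrib)
      qed
      finally show "0 \<le> y \<bullet> ((diag_mat (\<lambda>k. 1 / g k) - transpose R ** D2 ** R) *v y)"
        using q1 q2 by (simp add: matrix_vector_mult_diff_rdistrib inner_diff_right)
    qed
  qed
qed

end
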